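(* Let $\Omega\subset\mathbb{C}$ be a Carathéodory domain and $\varphi$ a subharmonic function on $\mathbb{C}$. Suppose $P$ is a holomorphic polynomial with $\int_\Omega|P|^2e^{-\varphi}d\lambda<\infty$. Let $p\in\partial\Omega$ and let $\Delta\subset\mathbb{C}\setminus\Omega$ be a disc with $p\in\partial\Delta$. Then for every $\varepsilon>0$ there is a function $\widetilde P$ holomorphic on a neighborhood of $\overline{\Omega}$ with $\widetilde P(p)=0$ and $\int_\Omega|\widetilde P-P|^2e^{-\varphi}d\lambda<\varepsilon$.
   Context: A Carathéodory domain is a simply-connected bounded domain $\Omega\subset\mathbb{C}$ whose boundary is also the boundary of an unbounded domain. $d\lambda$ is Lebesgue measure. *)

theory Defs
  imports "HOL-Complex_Analysis.Complex_Analysis" "HOL-Computational_Algebra.Polynomial"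
begin

definition caratheodory_domain :: "complex set \<Rightarrow> bool" where
  "caratheodory_domain \<Omega> \<longleftrightarrow>
     open \<Omega> \<and> connected \<Omega> \<and> \<Omega> \<noteq> {} \<and> bounded \<Omega> \<and> simply_connected \<Omega> \<and>
     (\<exists>U. open U \<and> connected U \<and> U \<noteq> {} \<and> \<not> bounded U \<and> frontier U = frontier \<Omega>)"

definition usc :: "(complex \<Rightarrow> ereal) \<Rightarrow> bool" where
  "usc \<phi> \<longleftrightarrow> (\<forall>a::ereal. open {z. \<phi> z < a})"

definition circle_mean :: "(complex \<Rightarrow> ereal) \<Rightarrow> complex \<Rightarrow> real \<Rightarrow> ereal" where
  "circle_mean \<phi> z r =
     (enn2ereal (\<integral>\<^sup>+ t. indicator {0..2*pi} t * e2ennreal (max 0 (\<phi> (z + of_real r * cis t))) \<partial>lborel)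
      - enn2ereal (\<integral>\<^sup>+ t. indicator {0..2*pi} t * e2ennreal (max 0 (- \<phi> (z + of_real r * cis t))) \<partial>lborel))
     / ereal (2 * pi)"

definition subharmonic_on_C :: "(complex \<Rightarrow> ereal) \<Rightarrow> bool" where
  "subharmonic_on_C \<phi> \<longleftrightarrow>
     (\<forall>z. \<phi> z < \<infinity>) \<and> usc \<phi> \<and> (\<exists>z. \<phi> z \<noteq> -\<infinity>) \<and>
     (\<forall>z r. r > 0 \<longrightarrow> \<phi> z \<le> circle_mean \<phi> z r)"

definition weight :: "(complex \<Rightarrow> ereal) \<Rightarrow> complex \<Rightarrow> ennreal" where
  "weight \<phi> z = (if \<phi> z = -\<infinity> then \<infinity> else ennreal (exp (- real_of_ereal (\<phi> z))))"

end

theory Submission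
  imports Defs
begin

lemma usc_measurable:
  assumes "usc \<phi>" shows "\<phi> \<in> borel_measurable borel"
proof (rule borel_measurableI_less)
  fix y
  have "open {z. \<phi> z < y}" using assms unfolding usc_def by blast
  then show "{x \<in> space borel. \<phi> x < y} \<in> sets borel" by auto
qed

lemma weight_measurable:
  assumes "usc \<phi>" shows "weight \<phi> \<in> borel_measurable borel"
proof -
  note [measurable] = usc_measurable[OF assms]
  show ?thesis unfolding weight_def[abs_def] by measurable
qed

theorem theorem4p4:
  fixes \<Omega> :: "complex set" and \<phi> :: "complex \<Rightarrow> ereal" and P :: "complex poly"
    and p c :: complex and r :: real and \<epsilon> :: real
  assumes "caratheodory_domain \<Omega>"
    and "subharmonic_on_C \<phi>"
    and "(\<integral>\<^sup>+ z\<in>\<Omega>. ennreal ((cmod (poly P z))\<^sup>2) * weight \<phi> z \<partial>lborel) < \<infinity>"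
    and "p \<in> frontier \<Omega>"
    and "r > 0" and "ball c r \<subseteq> - \<Omega>" and "p \<in> frontier (ball c r)"
    and "\<epsilon> > 0"
  shows "\<exists>U Pt. open U \<and> closure \<Omega> \<subseteq> U \<and> Pt holomorphic_on U \<and> Pt p = 0 \<and>
           (\<integral>\<^sup>+ z\<in>\<Omega>. ennreal ((cmod (Pt z - poly P z))\<^sup>2) * weight \<phi> z \<partial>lborel) < ennreal \<epsilon>"
proof -
  have opn: "open \<Omega>" using assms(1) unfolding caratheodory_domain_def by blast
  have usc: "usc \<phi>" using assms(2) unfolding subharmonic_on_C_def by blast
  note [measurable] = weight_measurable[OF usc]
  have \<Omega>meas[measurable]: "\<Omega> \<in> sets borel" using opn by auto
  have dp: "cmod (p - c) = r" using assms(5,7) by (simp add: dist_norm norm_minus_commute)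
  have disj: "\<Omega> \<inter> ball c r = {}" using assms(6) by blast
  hence disj2: "\<Omega> \<inter> closure (ball c r) = {}" using open_Int_closure_eq_empty[OF opn] by blast
  have cnot: "c \<notin> closure \<Omega>"
  proof
    assume "c \<in> closure \<Omega>"
    moreover have "ball c r \<inter> closure \<Omega> = {}"
      using open_Int_closure_eq_empty[of "ball c r" \<Omega>] disj by auto
    moreover have "c \<in> ball c r" using assms(5) by simp
    ultimately show False by blast
  qed
  define u where "u z = (p - c) / (z - c)" for z
  have ult: "cmod (u z) < 1" if "z \<in> \<Omega>" for z
  proof -
    have "z \<notin> closure (ball c r)" using disj2 that by blast
    hence "cmod (z - c) > r" using assms(5) by (simp add: dist_norm norm_minus_commute)
    thus ?thesis using dp assms(5) by (simp add: u_def norm_divide divide_less_eq)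
  qed
  define g where "g z = ennreal ((cmod (poly P z))\<^sup>2) * weight \<phi> z * indicator \<Omega> z" for z
  define f where "f n z = ennreal (cmod (u z) ^ (2*n)) * g z" for n z
  have gmeas[measurable]: "g \<in> borel_measurable borel" 
  proof -
    have "poly P \<in> borel_measurable borel"
      by (intro borel_measurable_continuous_onI) (auto intro: continuous_intros)
    moreover have "indicator \<Omega> \<in> borel_measurable (borel :: complex measure)"
      using \<Omega>meas by (rule borel_measurable_indicator)
    ultimately show ?thesis unfolding g_def[abs_def] using weight_measurable[OF usc]
      by measurable
  qed
  have umeas[measurable]: "u \<in> borel_measurable borel" unfolding u_def by measurable
  have fmeas: "f n \<in> borel_measurable lborel" for n unfolding f_def by measurable
  have gfin: "integral\<^sup>N lborel g < \<infinity>" using assms(3) unfolding g_def by simp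
  have f0: "f 0 = g" by (auto simp: f_def)
  have decp: "f (Suc n) z \<le> f n z" for n z
    proof (cases "z \<in> \<Omega>")
      case True
      have "cmod (u z) ^ (2 * Suc n) \<le> cmod (u z) ^ (2*n)"
        using ult[OF True] by (intro power_decreasing) auto
      thus ?thesis unfolding f_def by (intro mult_right_mono ennreal_leI) auto
    qed (simp add: f_def g_def)
  have dec: "AE z in lborel. f (Suc n) z \<le> f n z" for n using decp by simp
  have AEfin: "AE z in lborel. g z \<noteq> \<infinity>"
    using nn_integral_PInf_AE[of g lborel] gfin by simp
  have "AE z in lborel. (INF n. f n z) = 0"
    using AEfin
  proof eventually_elim
    case (elim z)
    show ?case
    proof (cases "z \<in> \<Omega>")
      case True
      have ds: "decseq (\<lambda>n. f n z)"
        using decp by (intro decseq_SucI) auto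
      have "(\<lambda>n. cmod (u z) ^ (2*n)) \<longlonglongrightarrow> 0"
      proof -
        have "(\<lambda>n. (cmod (u z) ^ 2) ^ n) \<longlonglongrightarrow> 0"
          using ult[OF True] by (intro LIMSEQ_power_zero) (auto simp: abs_square_less_1)
        thus ?thesis by (simp add: power_mult)
      qed
      hence "(\<lambda>n. ennreal (cmod (u z) ^ (2*n))) \<longlonglongrightarrow> ennreal 0"
        by (intro tendsto_ennrealI)
      hence "(\<lambda>n. g z * ennreal (cmod (u z) ^ (2*n))) \<longlonglongrightarrow> g z * 0"
        using elim by (intro ennreal_tendsto_cmult) (auto simp: top.not_eq_extremum)
      hence "(\<lambda>n. f n z) \<longlonglongrightarrow> 0" by (simp add: f_def mult.commute)
      thus ?thesis using LIMSEQ_INF[OF ds] LIMSEQ_unique by blast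
    next
      case False
      thus ?thesis by (simp add: f_def g_def)
    qed
  qed
  hence "(\<integral>\<^sup>+ z. (INF n. f n z) \<partial>lborel) = 0"
    by (simp add: nn_integral_cong_AE)
  moreover have "(\<integral>\<^sup>+ z. (INF n. f n z) \<partial>lborel) = (INF n. integral\<^sup>N lborel (f n))"
    using dec fmeas gfin f0 by (intro nn_integral_monotone_convergence_INF_AE[of _ _ 0]) auto
  ultimately have "(INF n. integral\<^sup>N lborel (f n)) < ennreal \<epsilon>" using assms(8) by simp
  then obtain n where n: "integral\<^sup>N lborel (f n) < ennreal \<epsilon>" by (auto simp: INF_less_iff)
  define Pt where "Pt z = poly P z * (1 - u z ^ n)" for z
  have eq: "ennreal ((cmod (Pt z - poly P z))\<^sup>2) * weight \<phi> z * indicator \<Omega> z = f n z" for z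
  proof -
    have "Pt z - poly P z = - (poly P z * u z ^ n)" by (simp add: Pt_def algebra_simps)
    hence "(cmod (Pt z - poly P z))\<^sup>2 = cmod (u z) ^ (2*n) * (cmod (poly P z))\<^sup>2"
      by (simp add: norm_mult norm_power power_mult_distrib power_mult[symmetric] mult.commute)
    thus ?thesis by (simp add: f_def g_def ennreal_mult mult.assoc)
  qed
  show ?thesis
  proof (intro exI conjI)
    show "open (- {c})" by auto
    show "closure \<Omega> \<subseteq> - {c}" using cnot by auto
    show "Pt holomorphic_on - {c}" unfolding Pt_def u_def by (intro holomorphic_intros) auto
    show "Pt p = 0" using dp assms(5) by (auto simp: Pt_def u_def)
    show "(\<integral>\<^sup>+ z\<in>\<Omega>. ennreal ((cmod (Pt z - poly P z))\<^sup>2) * weight \<phi> z \<partial>lborel) < ennreal \<epsilon>"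
      using n eq by simp
  qed
qed

end
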